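(* Let $d\ge2$ be an integer and $c>0$ real. For each integer $N>c^2$ define, for $A\subseteq\{1,\dots,N\}$, $$(\sigma^{(N)}_A)^2=\Big(\frac{c}{\sqrt N}\Big)^{|A|}\Big(1-\frac{c}{\sqrt N}\Big)^{N-|A|}$$ (with $\sigma^{(N)}_A\ge0$). Then: (1) $\sum_{A\subseteq\{1,\dots,N\}}(\sigma^{(N)}_A)^2=1$ for each such $N$; (2) $\lim_{N\to\infty}\sum_{A_1,A_2,A_3\subseteq\{1,\dots,N\},\ A_1\cap A_2\cap A_3\neq\emptyset}(\sigma^{(N)}_{A_1})^2(\sigma^{(N)}_{A_2})^2(\sigma^{(N)}_{A_3})^2=0$; (3) with $p_k=\frac{1}{k!}c^{2k}e^{-c^2}$ ($k\ge0$), for every $k\in\mathbb N$ and all nonnegative integers $n_{ij}$, $1\le i<j\le k$, $$\lim_{N\to\infty}\sum_{\substack{A_1,\dots,A_k\subseteq\{1,\dots,N\}\\ |A_i\cap A_j|=n_{ij}\ \forall\,1\le i<j\le k}}(\sigma^{(N)}_{A_1})^2\cdots(\sigma^{(N)}_{A_k})^2=\prod_{1\le i<j\le k}p_{n_{ij}};$$ (4) for each $n\in\mathbb N$, $\lim_{N\to\infty}\sum_{A_1,\dots,A_n\subseteq\{1,\dots,N\}}(\sigma^{(N)}_{A_1})^2\cdots(\sigma^{(N)}_{A_n})^2\, d^{-2|A_1\setminus(A_2\cup\cdots\cup A_n)|}=0$. Moreover $q:=\sum_{k\ge0}p_kd^{-2k}=e^{-(1-\frac1{d^2})c^2}$. 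*)

theory Defs
  imports Complex_Main "HOL-Library.FuncSet"
begin

definition sigma_sq :: "real \<Rightarrow> nat \<Rightarrow> nat set \<Rightarrow> real" where
  "sigma_sq c N A = (c / sqrt (real N)) ^ card A * (1 - c / sqrt (real N)) ^ (N - card A)"

definition pois :: "real \<Rightarrow> nat \<Rightarrow> real" where
  "pois c k = c ^ (2 * k) * exp (- (c ^ 2)) / fact k"

end

theory Submission
  imports Defs "HOL-Real_Asymp.Real_Asymp"
begin


lemma wt_prod:
  fixes p :: real
  assumes "finite D" "X \<subseteq> D"
  shows "p ^ card X * (1 - p) ^ (card D - card X) = (\<Prod>e\<in>D. if e \<in> X then p else 1 - p)"
proof -
  have "(\<Prod>e\<in>D. if e \<in> X then p else 1 - p) = (\<Prod>e\<in>D \<inter> X. p) * (\<Prod>e\<in>D - X. 1 - p)"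
    by (simp add: prod.If_cases assms Diff_eq)
  also have "\<dots> = p ^ card X * (1 - p) ^ (card D - card X)"
    using assms by (simp add: Int_absorb1 card_Diff_subset finite_subset)
  finally show ?thesis by simp
qed

lemma binom_sum1:
  fixes p :: real
  assumes "finite D"
  shows "(\<Sum>A\<in>Pow D. p ^ card A * (1 - p) ^ (card D - card A)) = 1"
proof -
  have "(\<Prod>x\<in>D. p + (1 - p)) = (\<Sum>X\<in>Pow D. (\<Prod>x\<in>X. p) * (\<Prod>x\<in>D-X. 1 - p))"
    by (rule prod_add[OF assms])
  also have "\<dots> = (\<Sum>A\<in>Pow D. p ^ card A * (1 - p) ^ (card D - card A))"
    by (intro sum.cong refl) (use assms in \<open>auto simp: card_Diff_subset finite_subset\<close>)
  finally show ?thesis by simp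
qed

lemma binom_sum_mem:
  fixes p :: real
  assumes "finite D" "x \<in> D"
  shows "(\<Sum>A\<in>Pow D. (if x \<in> A then 1 else 0) * (p ^ card A * (1 - p) ^ (card D - card A))) = p"
proof -
  define a where "a = (\<lambda>e. if e = x then p else p)"
  define b where "b = (\<lambda>e. if e = x then 0 else 1 - p)"
  have "(\<Prod>e\<in>D. a e + b e) = (\<Sum>X\<in>Pow D. (\<Prod>e\<in>X. a e) * (\<Prod>e\<in>D-X. b e))"
    by (rule prod_add[OF assms(1)])
  also have "\<dots> = (\<Sum>A\<in>Pow D. (if x \<in> A then 1 else 0) * (p ^ card A * (1 - p) ^ (card D - card A)))"
  proof (intro sum.cong refl)
    fix X assume X: "X \<in> Pow D"
    hence fin: "finite X" using assms finite_subset by auto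
    show "(\<Prod>e\<in>X. a e) * (\<Prod>e\<in>D-X. b e) = (if x \<in> X then 1 else 0) * (p ^ card X * (1 - p) ^ (card D - card X))"
    proof (cases "x \<in> X")
      case True
      have "(\<Prod>e\<in>D-X. b e) = (\<Prod>e\<in>D-X. 1 - p)" by (intro prod.cong) (auto simp: b_def True)
      thus ?thesis using True X fin assms by (simp add: a_def card_Diff_subset)
    next
      case False
      have "(\<Prod>e\<in>D-X. b e) = 0" using False assms X by (intro prod_zero) (auto simp: b_def)
      thus ?thesis using False by simp
    qed
  qed
  finally have "(\<Sum>A\<in>Pow D. (if x \<in> A then 1 else 0) * (p ^ card A * (1 - p) ^ (card D - card A))) = (\<Prod>e\<in>D. a e + b e)" by simp
  also have "\<dots> = (\<Prod>e\<in>insert x (D - {x}). a e + b e)" using assms by (simp add: insert_absorb)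
  also have "\<dots> = (a x + b x) * (\<Prod>e\<in>D - {x}. a e + b e)" using assms by (subst prod.insert) auto
  also have "(\<Prod>e\<in>D - {x}. a e + b e) = 1" by (intro prod.neutral) (auto simp: a_def b_def)
  finally show ?thesis by (simp add: a_def b_def)
qed

definition tr :: "nat set \<Rightarrow> nat set \<Rightarrow> (nat \<Rightarrow> nat set) \<Rightarrow> nat \<Rightarrow> nat set" where
  "tr I D f = (\<lambda>i\<in>I. {e\<in>D. i \<in> f e})"

lemma tr_bij:
  assumes "finite I" "finite D"
  shows "bij_betw (tr I D) (PiE D (\<lambda>_. Pow I)) (PiE I (\<lambda>_. Pow D))"
proof (rule bij_betw_byWitness[where f' = "tr D I"])
  show "\<forall>a\<in>PiE D (\<lambda>_. Pow I). tr D I (tr I D a) = a"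
    by (auto simp: tr_def PiE_def Pi_def extensional_def fun_eq_iff)
  show "\<forall>a\<in>PiE I (\<lambda>_. Pow D). tr I D (tr D I a) = a"
    by (auto simp: tr_def PiE_def Pi_def extensional_def fun_eq_iff)
  show "tr I D ` PiE D (\<lambda>_. Pow I) \<subseteq> PiE I (\<lambda>_. Pow D)"
    by (auto simp: tr_def PiE_def Pi_def extensional_def)
  show "tr D I ` PiE I (\<lambda>_. Pow D) \<subseteq> PiE D (\<lambda>_. Pow I)"
    by (auto simp: tr_def PiE_def Pi_def extensional_def)
qed

lemma sum_tr:
  assumes "finite I" "finite D"
  shows "(\<Sum>A\<in>PiE I (\<lambda>_. Pow D). g A) = (\<Sum>f\<in>PiE D (\<lambda>_. Pow I). g (tr I D f))"
  using sum.reindex_bij_betw[OF tr_bij[OF assms], of g] by simp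

definition mu :: "real \<Rightarrow> nat \<Rightarrow> nat set \<Rightarrow> real" where
  "mu p k S = p ^ card S * (1 - p) ^ (k - card S)"

lemma prod_tr:
  fixes p :: real
  assumes "finite I" "finite D" "f \<in> PiE D (\<lambda>_. Pow I)"
  shows "(\<Prod>i\<in>I. mu p (card D) (tr I D f i)) = (\<Prod>e\<in>D. mu p (card I) (f e))"
proof -
  have "(\<Prod>i\<in>I. mu p (card D) (tr I D f i)) = (\<Prod>i\<in>I. \<Prod>e\<in>D. if e \<in> tr I D f i then p else 1 - p)"
    unfolding mu_def by (intro prod.cong refl wt_prod) (use assms in \<open>auto simp: tr_def\<close>)
  also have "\<dots> = (\<Prod>e\<in>D. \<Prod>i\<in>I. if i \<in> f e then p else 1 - p)"
    by (subst prod.swap) (intro prod.cong refl, auto simp: tr_def)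
  also have "\<dots> = (\<Prod>e\<in>D. mu p (card I) (f e))"
    unfolding mu_def by (intro prod.cong refl wt_prod[symmetric]) (use assms in auto)
  finally show ?thesis .
qed

lemma sum_PiE_prod:
  fixes g :: "nat set \<Rightarrow> real"
  assumes "finite D" "finite \<Omega>"
  shows "(\<Sum>f\<in>PiE D (\<lambda>_. \<Omega>). \<Prod>e\<in>D. g (f e)) = (\<Sum>S\<in>\<Omega>. g S) ^ card D"
  using prod_sum_PiE[of D "\<lambda>_. \<Omega>" "\<lambda>_. g"] assms by simp




definition mcoef :: "nat \<Rightarrow> 'a set \<Rightarrow> ('a \<Rightarrow> nat) \<Rightarrow> real" where
  "mcoef N J n = (if sum n J \<le> N then fact N / (fact (N - sum n J) * (\<Prod>j\<in>J. fact (n j))) else 0)"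

lemma mcoef_empty: "mcoef N {} n = 1"
  by (simp add: mcoef_def)

lemma mcoef_insert:
  assumes "finite J" "j \<notin> J"
  shows "real (N choose n j) * mcoef (N - n j) J n = mcoef N (insert j J) n"
proof (cases "n j + sum n J \<le> N")
  case True
  have e: "N - n j - sum n J = N - (n j + sum n J)" by simp
  have "real (N choose n j) = fact N / (fact (n j) * fact (N - n j))"
    using True by (intro binomial_fact) simp
  then show ?thesis using True assms
    by (simp add: mcoef_def e field_simps)
next
  case False
  then show ?thesis using assms
    by (auto simp: mcoef_def not_le binomial_eq_0)
qed

lemma multi:
  fixes \<mu> :: "'a \<Rightarrow> real" and D :: "nat set"
  assumes "finite J" "finite Oth" "J \<inter> Oth = {}" "finite D"
  shows "(\<Sum>f \<in> {f \<in> PiE D (\<lambda>_. J \<union> Oth). \<forall>j\<in>J. card {e\<in>D. f e = j} = n j}. \<Prod>e\<in>D. \<mu> (f e))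
     = mcoef (card D) J n * (\<Prod>j\<in>J. \<mu> j ^ n j) * (\<Sum>x\<in>Oth. \<mu> x) ^ (card D - sum n J)"
  using assms
proof (induction J arbitrary: D rule: finite_induct)
  case empty
  then show ?case using prod_sum_PiE[of D "\<lambda>_. Oth" "\<lambda>_. \<mu>"] by (simp add: mcoef_empty)
next
  case (insert j J)
  define F where "F = {f \<in> PiE D (\<lambda>_. insert j J \<union> Oth). \<forall>j'\<in>insert j J. card {e\<in>D. f e = j'} = n j'}"
  define TT where "TT = {T. T \<subseteq> D \<and> card T = n j}"
  define G where "G = (\<lambda>T. {g \<in> PiE (D - T) (\<lambda>_. J \<union> Oth). \<forall>j'\<in>J. card {e\<in>D - T. g e = j'} = n j'})"
  define \<psi> where "\<psi> = (\<lambda>(T::nat set, g::nat \<Rightarrow> 'a). (\<lambda>e. if e \<in> T then j else g e))"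
  define \<phi> where "\<phi> = (\<lambda>f::nat \<Rightarrow> 'a. ({e\<in>D. f e = j}, restrict f (D - {e\<in>D. f e = j})))"
  have jO: "j \<notin> Oth" using insert by auto
  have bij: "bij_betw \<psi> (Sigma TT G) F"
  proof (rule bij_betw_byWitness[where f' = \<phi>])
    show "\<forall>a\<in>Sigma TT G. \<phi> (\<psi> a) = a"
    proof
      fix a assume a: "a \<in> Sigma TT G"
      obtain T g where a': "a = (T, g)" by (cases a)
      have T: "T \<subseteq> D" and g: "g \<in> PiE (D - T) (\<lambda>_. J \<union> Oth)" using a a' by (auto simp: TT_def G_def)
      have 1: "{e\<in>D. \<psi> (T, g) e = j} = T"
        using T g insert.hyps jO by (auto simp: \<psi>_def PiE_def Pi_def)
      show "\<phi> (\<psi> a) = a" unfolding a' \<phi>_def 1 using g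
        by (auto simp: \<psi>_def fun_eq_iff PiE_def extensional_def)
    qed
    show "\<forall>a\<in>F. \<psi> (\<phi> a) = a"
      by (auto simp: \<psi>_def \<phi>_def fun_eq_iff F_def PiE_def extensional_def)
    show "\<psi> ` Sigma TT G \<subseteq> F"
    proof
      fix x assume "x \<in> \<psi> ` Sigma TT G"
      then obtain T g where Tg: "T \<in> TT" "g \<in> G T" and x: "x = \<psi> (T, g)" by auto
      have T: "T \<subseteq> D" "card T = n j" and g: "g \<in> PiE (D - T) (\<lambda>_. J \<union> Oth)"
        and gc: "\<forall>j'\<in>J. card {e\<in>D - T. g e = j'} = n j'" using Tg by (auto simp: TT_def G_def)
      have 1: "{e\<in>D. x e = j} = T"
        using T g insert.hyps jO by (auto simp: x \<psi>_def PiE_def Pi_def)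
      have 2: "{e\<in>D. x e = j'} = {e\<in>D - T. g e = j'}" if "j' \<in> J" for j'
        using that insert.hyps by (auto simp: x \<psi>_def)
      have 3: "x \<in> PiE D (\<lambda>_. insert j J \<union> Oth)"
        using g T by (auto simp: x \<psi>_def PiE_def Pi_def extensional_def)
      show "x \<in> F" unfolding F_def using 1 2 3 T gc by auto
    qed
    show "\<phi> ` F \<subseteq> Sigma TT G"
    proof
      fix y assume "y \<in> \<phi> ` F"
      then obtain f where f: "f \<in> F" and y: "y = \<phi> f" by auto
      define T where "T = {e\<in>D. f e = j}"
      have fP: "f \<in> PiE D (\<lambda>_. insert j J \<union> Oth)" and fc: "\<forall>j'\<in>insert j J. card {e\<in>D. f e = j'} = n j'"
        using f by (auto simp: F_def)
      have "T \<in> TT" using fc by (auto simp: TT_def T_def)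
      moreover have "restrict f (D - T) \<in> G T"
      proof -
        have "restrict f (D - T) \<in> PiE (D - T) (\<lambda>_. J \<union> Oth)"
          using fP by (auto simp: T_def PiE_def Pi_def)
        moreover have "{e\<in>D - T. restrict f (D - T) e = j'} = {e\<in>D. f e = j'}" if "j' \<in> J" for j'
          using that insert.hyps by (auto simp: T_def)
        ultimately show ?thesis using fc by (auto simp: G_def)
      qed
      ultimately show "y \<in> Sigma TT G" by (simp add: y \<phi>_def T_def)
    qed
  qed
  have finTT: "finite TT" using insert.prems by (auto simp: TT_def)
  have finG: "finite (G T)" for T using insert.prems insert.hyps unfolding G_def by (intro finite_subset[OF _ finite_PiE[of "D - T" "\<lambda>_. J \<union> Oth"]]) auto
  have "(\<Sum>f\<in>F. \<Prod>e\<in>D. \<mu> (f e)) = (\<Sum>x\<in>Sigma TT G. \<Prod>e\<in>D. \<mu> (\<psi> x e))"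
    using sum.reindex_bij_betw[OF bij, of "\<lambda>f. \<Prod>e\<in>D. \<mu> (f e)"] by simp
  also have "\<dots> = (\<Sum>T\<in>TT. \<Sum>g\<in>G T. \<Prod>e\<in>D. \<mu> (\<psi> (T, g) e))"
  proof -
    have "(\<Sum>x\<in>Sigma TT G. \<Prod>e\<in>D. \<mu> (\<psi> x e)) = (\<Sum>x\<in>Sigma TT G. case_prod (\<lambda>T g. \<Prod>e\<in>D. \<mu> (\<psi> (T, g) e)) x)"
      by (intro sum.cong) auto
    also have "\<dots> = (\<Sum>T\<in>TT. \<Sum>g\<in>G T. \<Prod>e\<in>D. \<mu> (\<psi> (T, g) e))"
      by (rule sum.Sigma[symmetric]) (use finTT finG in auto)
    finally show ?thesis .
  qed
  also have "\<dots> = (\<Sum>T\<in>TT. \<mu> j ^ n j * (mcoef (card D - n j) J n * (\<Prod>j\<in>J. \<mu> j ^ n j) * (\<Sum>x\<in>Oth. \<mu> x) ^ (card D - n j - sum n J)))"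
  proof (intro sum.cong refl)
    fix T assume T: "T \<in> TT"
    hence TD: "T \<subseteq> D" "card T = n j" by (auto simp: TT_def)
    have fT: "finite T" using TD insert.prems finite_subset by blast
    have "(\<Sum>g\<in>G T. \<Prod>e\<in>D. \<mu> (\<psi> (T, g) e)) = (\<Sum>g\<in>G T. \<mu> j ^ n j * (\<Prod>e\<in>D - T. \<mu> (g e)))"
    proof (intro sum.cong refl)
      fix g assume "g \<in> G T"
      have "(\<Prod>e\<in>D. \<mu> (\<psi> (T, g) e)) = (\<Prod>e\<in>T. \<mu> (\<psi> (T, g) e)) * (\<Prod>e\<in>D - T. \<mu> (\<psi> (T, g) e))"
        using prod.subset_diff[OF TD(1), where g="\<lambda>e. \<mu> (\<psi> (T, g) e)"] insert.prems by (simp add: mult.commute)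
      also have "(\<Prod>e\<in>T. \<mu> (\<psi> (T, g) e)) = \<mu> j ^ n j" using TD by (simp add: \<psi>_def)
      also have "(\<Prod>e\<in>D - T. \<mu> (\<psi> (T, g) e)) = (\<Prod>e\<in>D - T. \<mu> (g e))" by (intro prod.cong) (auto simp: \<psi>_def)
      finally show "(\<Prod>e\<in>D. \<mu> (\<psi> (T, g) e)) = \<mu> j ^ n j * (\<Prod>e\<in>D - T. \<mu> (g e))" .
    qed
    also have "\<dots> = \<mu> j ^ n j * (\<Sum>g\<in>G T. \<Prod>e\<in>D - T. \<mu> (g e))" by (simp add: sum_distrib_left)
    also have "(\<Sum>g\<in>G T. \<Prod>e\<in>D - T. \<mu> (g e)) = mcoef (card (D - T)) J n * (\<Prod>j\<in>J. \<mu> j ^ n j) * (\<Sum>x\<in>Oth. \<mu> x) ^ (card (D - T) - sum n J)"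
      unfolding G_def using insert by (intro insert.IH) auto
    also have "card (D - T) = card D - n j" using TD fT by (simp add: card_Diff_subset)
    finally show "(\<Sum>g\<in>G T. \<Prod>e\<in>D. \<mu> (\<psi> (T, g) e)) = \<mu> j ^ n j * (mcoef (card D - n j) J n * (\<Prod>j\<in>J. \<mu> j ^ n j) * (\<Sum>x\<in>Oth. \<mu> x) ^ (card D - n j - sum n J))" .
  qed
  also have "\<dots> = real (card D choose n j) * (\<mu> j ^ n j * (mcoef (card D - n j) J n * (\<Prod>j\<in>J. \<mu> j ^ n j) * (\<Sum>x\<in>Oth. \<mu> x) ^ (card D - n j - sum n J)))"
    using n_subsets[OF insert.prems(3), of "n j"] by (simp add: TT_def)
  also have "\<dots> = mcoef (card D) (insert j J) n * (\<Prod>j\<in>insert j J. \<mu> j ^ n j) * (\<Sum>x\<in>Oth. \<mu> x) ^ (card D - sum n (insert j J))"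
    using insert.hyps by (simp add: mcoef_insert[symmetric] diff_diff_add)
  finally show ?case by (simp add: F_def)
qed




lemma lim_p: "(\<lambda>N::nat. c / sqrt (real N)) \<longlonglongrightarrow> 0" by real_asymp
lemma lim_p3: "(\<lambda>N::nat. real N * (c / sqrt (real N))^3) \<longlonglongrightarrow> 0"
proof -
  have l: "(\<lambda>N::nat. c^3 / sqrt (real N)) \<longlonglongrightarrow> 0" by real_asymp
  have "\<forall>\<^sub>F N in sequentially. c^3 / sqrt (real N) = real N * (c / sqrt (real N))^3"
    using eventually_gt_at_top[of 0]
  proof eventually_elim
    case (elim N)
    have "sqrt (real N) ^ 3 = real N * sqrt (real N)"
      by (simp add: power3_eq_cube)
    thus ?case using elim by (simp add: power_divide)
  qed
  thus ?thesis using Lim_transform_eventually[OF l] by simp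
qed
lemma lim_p2: "\<forall>\<^sub>F N in sequentially. real N * (c / sqrt (real N))^2 = c^2"
proof -
  have "\<forall>\<^sub>F N in sequentially. N > (0::nat)" by (simp add: eventually_gt_at_top)
  thus ?thesis by eventually_elim (simp add: power_divide)
qed

lemma fact_split:
  assumes "M \<le> N"
  shows "(fact N :: real) = fact (N - M) * (\<Prod>i<M. real (N - i))"
  using assms
proof (induction M)
  case 0 thus ?case by simp
next
  case (Suc M)
  have e: "N - M = Suc (N - Suc M)" using Suc.prems by simp
  have "(fact N :: real) = fact (N - M) * (\<Prod>i<M. real (N - i))" using Suc by simp
  also have "fact (N - M) = real (N - M) * (fact (N - Suc M) :: real)"
  proof -
    have "(fact (N - M) :: real) = fact (Suc (N - Suc M))" using e by simp
    also have "\<dots> = real (Suc (N - Suc M)) * fact (N - Suc M)" by (rule fact_Suc)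
    finally show ?thesis using e by simp
  qed
  finally show ?case by (simp add: prod.lessThan_Suc mult_ac)
qed

lemma lim_fact_ratio: "(\<lambda>N. fact N / (fact (N - M) * real N ^ M) :: real) \<longlonglongrightarrow> 1"
proof -
  have lim: "(\<lambda>N. \<Prod>i<M. (real N - real i) / real N) \<longlonglongrightarrow> (\<Prod>i<M. 1)"
  proof (intro tendsto_prod)
    fix i assume "i \<in> {..<M}"
    show "(\<lambda>N. (real N - real i) / real N) \<longlonglongrightarrow> 1" by real_asymp
  qed
  have ev: "\<forall>\<^sub>F N in sequentially. (\<Prod>i<M. (real N - real i) / real N) = fact N / (fact (N - M) * real N ^ M)"
    using eventually_ge_at_top[of "max M 1"]
  proof eventually_elim
    case (elim N)
    hence MN: "M \<le> N" and N0: "N > 0" by auto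
    have "fact N / (fact (N - M) * real N ^ M) = (\<Prod>i<M. real (N - i)) / real N ^ M"
      using fact_split[OF MN] by simp
    also have "\<dots> = (\<Prod>i<M. real (N - i) / real N)" by (simp add: prod_dividef)
    also have "\<dots> = (\<Prod>i<M. (real N - real i) / real N)"
      by (intro prod.cong refl) (use MN in \<open>auto simp: of_nat_diff\<close>)
    finally show ?case by simp
  qed
  show ?thesis using Lim_transform_eventually[OF lim ev] by simp
qed

lemma lim_exp:
  fixes z :: "nat \<Rightarrow> real"
  assumes z: "z \<longlonglongrightarrow> L" and nn: "\<forall>\<^sub>F N in sequentially. z N \<ge> 0"
  shows "(\<lambda>N. (1 - z N / real N) ^ N) \<longlonglongrightarrow> exp (- L)"
proof -
  have zN: "(\<lambda>N. z N / real N) \<longlonglongrightarrow> 0"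
    using tendsto_mult[OF z lim_inverse_n'] by (simp add: divide_inverse)
  have zz: "(\<lambda>N. z N * (z N / real N)) \<longlonglongrightarrow> L * 0"
    by (intro tendsto_mult z zN)
  have small: "\<forall>\<^sub>F N in sequentially. z N / real N \<le> 1/2"
    using order_tendstoD(2)[OF zN, of "1/2"] by (auto elim: eventually_mono)
  have low: "(\<lambda>N. - z N - 2 * (z N * (z N / real N))) \<longlonglongrightarrow> - L - 2 * (L * 0)"
    by (intro tendsto_intros z zz)
  have up: "(\<lambda>N. - z N) \<longlonglongrightarrow> - L" by (intro tendsto_intros z)
  have ev1: "\<forall>\<^sub>F N in sequentially. - z N - 2 * (z N * (z N / real N)) \<le> real N * ln (1 - z N / real N)"
    using small nn eventually_gt_at_top[of 0]
  proof eventually_elim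
    case (elim N)
    have "- (z N / N) - 2 * (z N / N)^2 \<le> ln (1 - z N / N)"
      by (rule ln_one_minus_pos_lower_bound) (use elim in auto)
    hence "real N * (- (z N / N) - 2 * (z N / N)^2) \<le> real N * ln (1 - z N / N)"
      by (intro mult_left_mono) auto
    moreover have "real N * (- (z N / N) - 2 * (z N / N)^2) = - z N - 2 * (z N * (z N / real N))"
      using elim by (simp add: power2_eq_square field_simps)
    ultimately show ?case by simp
  qed
  have ev2: "\<forall>\<^sub>F N in sequentially. real N * ln (1 - z N / real N) \<le> - z N"
    using small nn eventually_gt_at_top[of 0]
  proof eventually_elim
    case (elim N)
    have "ln (1 - z N / N) \<le> - (z N / N)"
      by (rule ln_one_minus_pos_upper_bound) (use elim in auto)
    hence "real N * ln (1 - z N / N) \<le> real N * (- (z N / N))"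
      by (intro mult_left_mono) auto
    thus ?case using elim by simp
  qed
  have "(\<lambda>N. real N * ln (1 - z N / real N)) \<longlonglongrightarrow> - L"
    using tendsto_sandwich[OF ev1 ev2] low up by simp
  hence "(\<lambda>N. exp (real N * ln (1 - z N / real N))) \<longlonglongrightarrow> exp (- L)"
    by (intro tendsto_intros)
  moreover have "\<forall>\<^sub>F N in sequentially. exp (real N * ln (1 - z N / real N)) = (1 - z N / real N) ^ N"
    using small
  proof eventually_elim
    case (elim N)
    hence "1 - z N / real N > 0" by linarith
    thus ?case by (simp add: exp_of_nat_mult)
  qed
  ultimately show ?thesis by (rule Lim_transform_eventually)
qed




lemma sigma_mu: "sigma_sq c N A = mu (c / sqrt (real N)) N A"
  by (simp add: sigma_sq_def mu_def)

lemma part1: "(\<Sum>A\<in>Pow {1..N}. sigma_sq c N A) = 1"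
  using binom_sum1[of "{1..N}" "c / sqrt (real N)"] by (simp add: sigma_sq_def)

lemma p_bounds:
  assumes "c > 0" "real N > c^2"
  shows "0 \<le> c / sqrt (real N)" "c / sqrt (real N) \<le> 1"
proof -
  have "sqrt (c^2) < sqrt (real N)" by (rule real_sqrt_less_mono[OF assms(2)])
  hence "c < sqrt (real N)" using assms by (simp add: real_sqrt_abs)
  thus "0 \<le> c / sqrt (real N)" "c / sqrt (real N) \<le> 1" using assms by (auto simp: divide_le_eq_1)
qed

lemma ev_big: "\<forall>\<^sub>F N in sequentially. real N > c^2"
proof -
  obtain m :: nat where m: "real m > c^2" using reals_Archimedean2 by blast
  show ?thesis using eventually_ge_at_top[of m]
  proof eventually_elim
    case (elim N) thus ?case using \<open>real m > c^2\<close> by (smt (verit) of_nat_mono)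
  qed
qed

lemma triple_sum:
  fixes g :: "nat set \<Rightarrow> real"
  shows "(\<Sum>(a,b,c)\<in>P\<times>P\<times>P. g a * g b * g c) = sum g P ^ 3"
proof -
  have "(\<Sum>(a,b,c)\<in>P\<times>P\<times>P. g a * g b * g c) = (\<Sum>a\<in>P. \<Sum>b\<in>P. \<Sum>c\<in>P. g a * g b * g c)"
    by (simp add: sum.cartesian_product)
  also have "\<dots> = (\<Sum>a\<in>P. g a * (\<Sum>b\<in>P. g b * (\<Sum>c\<in>P. g c)))"
    by (simp add: sum_distrib_left mult.assoc)
  also have "\<dots> = sum g P ^ 3"
    by (simp add: sum_distrib_left[symmetric] sum_distrib_right[symmetric] power3_eq_cube)
  finally show ?thesis .
qed

lemma part5:
  assumes "d \<ge> (2::nat)"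
  shows "(\<lambda>k. pois c k * inverse (real d ^ (2 * k))) sums exp (- (1 - 1 / real d ^ 2) * c ^ 2)"
proof -
  have "(\<lambda>k. exp (- (c^2)) * ((c^2 / real d ^ 2) ^ k /\<^sub>R fact k)) sums (exp (- (c^2)) * exp (c^2 / real d ^ 2))"
    by (intro sums_mult exp_converges)
  moreover have "(\<lambda>k. exp (- (c^2)) * ((c^2 / real d ^ 2) ^ k /\<^sub>R fact k)) = (\<lambda>k. pois c k * inverse (real d ^ (2 * k)))"
  proof
    fix k
    show "exp (- (c^2)) * ((c^2 / real d ^ 2) ^ k /\<^sub>R fact k) = pois c k * inverse (real d ^ (2 * k))"
      unfolding pois_def by (simp add: power_mult power_divide divide_inverse mult_ac power_mult_distrib power_inverse flip: power_mult)
  qed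
  moreover have "exp (- (c^2)) * exp (c^2 / real d ^ 2) = exp (- (1 - 1 / real d ^ 2) * c ^ 2)"
  proof -
    have "- (c^2) + c^2 / real d ^ 2 = - (1 - 1 / real d ^ 2) * c ^ 2" by (simp add: algebra_simps)
    thus ?thesis by (simp add: exp_add[symmetric])
  qed
  ultimately show ?thesis by simp
qed

lemma card_ind:
  assumes "finite D" "X \<subseteq> D"
  shows "real (card X) = (\<Sum>x\<in>D. if x \<in> X then 1 else 0)"
proof -
  have "(\<Sum>x\<in>D. if x \<in> X then 1 else (0::real)) = (\<Sum>x\<in>X. 1)"
    using assms by (intro sum.mono_neutral_cong_right) auto
  thus ?thesis by simp
qed

lemma part2_bound:
  assumes "c > 0" "real N > c^2"
  shows "(\<Sum>(A1, A2, A3) \<in> {(A1, A2, A3). A1 \<subseteq> {1..N} \<and> A2 \<subseteq> {1..N} \<and> A3 \<subseteq> {1..N}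
              \<and> A1 \<inter> A2 \<inter> A3 \<noteq> {}}. sigma_sq c N A1 * sigma_sq c N A2 * sigma_sq c N A3)
         \<le> real N * (c / sqrt (real N))^3"
proof -
  define D where "D = {1..N}"
  define p where "p = c / sqrt (real N)"
  define P where "P = Pow D"
  define T3 where "T3 = {(A1, A2, A3). A1 \<subseteq> D \<and> A2 \<subseteq> D \<and> A3 \<subseteq> D \<and> A1 \<inter> A2 \<inter> A3 \<noteq> {}}"
  define w where "w = (\<lambda>(A1, A2, A3). sigma_sq c N A1 * sigma_sq c N A2 * sigma_sq c N A3)"
  define ci where "ci = (\<lambda>(A1::nat set, A2::nat set, A3::nat set). real (card (A1 \<inter> A2 \<inter> A3)))"
  have p01: "0 \<le> p" "p \<le> 1" using p_bounds[OF assms] by (auto simp: p_def)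
  have sig_nn: "sigma_sq c N A \<ge> 0" for A using p01 by (simp add: sigma_sq_def p_def[symmetric])
  have wnn: "w t \<ge> 0" for t using sig_nn by (auto simp: w_def split: prod.splits)
  have finD: "finite D" by (simp add: D_def)
  have T3P: "T3 \<subseteq> P \<times> P \<times> P" by (auto simp: T3_def P_def)
  have finP: "finite (P \<times> P \<times> P)" using finD by (simp add: P_def)
  have "(\<Sum>t\<in>T3. w t) \<le> (\<Sum>t\<in>T3. w t * ci t)"
  proof (intro sum_mono)
    fix t assume t: "t \<in> T3"
    obtain a b c' where tt: "t = (a, b, c')" by (cases t)
    have "finite (a \<inter> b \<inter> c')" using t tt finD by (auto simp: T3_def intro: finite_subset)
    hence "ci t \<ge> 1" using t tt by (auto simp: T3_def ci_def Suc_le_eq card_gt_0_iff)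
    thus "w t \<le> w t * ci t" using wnn[of t] by (simp add: mult_le_cancel_left1)
  qed
  also have "\<dots> \<le> (\<Sum>t\<in>P \<times> P \<times> P. w t * ci t)"
    by (intro sum_mono2 finP T3P mult_nonneg_nonneg wnn) (auto simp: ci_def split: prod.splits)
  also have "\<dots> = (\<Sum>t\<in>P \<times> P \<times> P. \<Sum>x\<in>D. (case t of (a, b, c') \<Rightarrow>
        ((if x \<in> a then 1 else 0) * sigma_sq c N a) * ((if x \<in> b then 1 else 0) * sigma_sq c N b) * ((if x \<in> c' then 1 else 0) * sigma_sq c N c')))"
  proof (intro sum.cong refl)
    fix t assume t: "t \<in> P \<times> P \<times> P"
    obtain a b c' where tt: "t = (a, b, c')" by (cases t)
    have "ci t = (\<Sum>x\<in>D. if x \<in> a \<inter> b \<inter> c' then 1 else 0)"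
      using card_ind[OF finD, of "a \<inter> b \<inter> c'"] t tt by (auto simp: ci_def P_def)
    thus "w t * ci t = (\<Sum>x\<in>D. (case t of (a, b, c') \<Rightarrow>
        ((if x \<in> a then 1 else 0) * sigma_sq c N a) * ((if x \<in> b then 1 else 0) * sigma_sq c N b) * ((if x \<in> c' then 1 else 0) * sigma_sq c N c')))"
      by (simp add: tt w_def sum_distrib_left) (intro sum.cong refl, auto)
  qed
  also have "\<dots> = (\<Sum>x\<in>D. \<Sum>t\<in>P \<times> P \<times> P. (case t of (a, b, c') \<Rightarrow>
        ((if x \<in> a then 1 else 0) * sigma_sq c N a) * ((if x \<in> b then 1 else 0) * sigma_sq c N b) * ((if x \<in> c' then 1 else 0) * sigma_sq c N c')))"
    by (rule sum.swap)
  also have "\<dots> = (\<Sum>x\<in>D. p ^ 3)"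
  proof (intro sum.cong refl)
    fix x assume x: "x \<in> D"
    have "(\<Sum>A\<in>P. (if x \<in> A then 1 else 0) * sigma_sq c N A) = p"
      using binom_sum_mem[OF finD x, of p] by (simp add: P_def sigma_sq_def p_def D_def)
    thus "(\<Sum>t\<in>P \<times> P \<times> P. (case t of (a, b, c') \<Rightarrow>
        ((if x \<in> a then 1 else 0) * sigma_sq c N a) * ((if x \<in> b then 1 else 0) * sigma_sq c N b) * ((if x \<in> c' then 1 else 0) * sigma_sq c N c'))) = p ^ 3"
      using triple_sum[of "\<lambda>A. (if x \<in> A then 1 else 0) * sigma_sq c N A" P] by simp
  qed
  also have "\<dots> = real N * p ^ 3" by (simp add: D_def)
  finally show ?thesis by (simp add: T3_def w_def D_def p_def)
qed

lemma part2:
  assumes "c > 0"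
  shows "(\<lambda>N::nat. \<Sum>(A1, A2, A3) \<in> {(A1, A2, A3). A1 \<subseteq> {1..N} \<and> A2 \<subseteq> {1..N} \<and> A3 \<subseteq> {1..N}
              \<and> A1 \<inter> A2 \<inter> A3 \<noteq> {}}.
          sigma_sq c N A1 * sigma_sq c N A2 * sigma_sq c N A3) \<longlonglongrightarrow> 0"
proof (rule tendsto_sandwich[OF _ _ tendsto_const lim_p3])
  show "\<forall>\<^sub>F N in sequentially. (\<Sum>(A1, A2, A3) \<in> {(A1, A2, A3). A1 \<subseteq> {1..N} \<and> A2 \<subseteq> {1..N} \<and> A3 \<subseteq> {1..N}
              \<and> A1 \<inter> A2 \<inter> A3 \<noteq> {}}. sigma_sq c N A1 * sigma_sq c N A2 * sigma_sq c N A3)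
         \<le> real N * (c / sqrt (real N))^3"
    using ev_big[of c] by eventually_elim (rule part2_bound[OF assms])
  show "\<forall>\<^sub>F N in sequentially. 0 \<le> (\<Sum>(A1, A2, A3) \<in> {(A1, A2, A3). A1 \<subseteq> {1..N} \<and> A2 \<subseteq> {1..N} \<and> A3 \<subseteq> {1..N}
              \<and> A1 \<inter> A2 \<inter> A3 \<noteq> {}}. sigma_sq c N A1 * sigma_sq c N A2 * sigma_sq c N A3)"
    using ev_big[of c]
  proof eventually_elim
    case (elim N)
    have "0 \<le> c / sqrt (real N)" "c / sqrt (real N) \<le> 1" using p_bounds[OF assms elim] by auto
    hence "sigma_sq c N A \<ge> 0" for A by (simp add: sigma_sq_def)
    thus ?case by (intro sum_nonneg) (auto simp: mult_nonneg_nonneg)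
  qed
qed




lemma part4_eq:
  fixes d :: nat and c :: real and N :: nat
  assumes n1: "n \<ge> 1"
  defines "p \<equiv> c / sqrt (real N)"
  shows "(\<Sum>A \<in> PiE {1..n} (\<lambda>_. Pow {1..N}).
             (\<Prod>i\<in>{1..n}. sigma_sq c N (A i))
             * inverse (real d ^ (2 * card (A 1 - (\<Union>i\<in>{2..n}. A i)))))
       = (1 - p * (1 - p) ^ (n - 1) * (1 - inverse (real d ^ 2))) ^ N"
proof -
  define I where "I = {1..n}"
  define D where "D = {1..N}"
  define r where "r = inverse (real d ^ 2)"
  define h where "h = (\<lambda>S. mu p n S * (if S = {1} then r else 1))"
  have finI: "finite I" and finD: "finite D" by (auto simp: I_def D_def)
  have 1: "1 \<in> I" using n1 by (simp add: I_def)
  have "(\<Sum>A \<in> PiE I (\<lambda>_. Pow D). (\<Prod>i\<in>I. sigma_sq c N (A i)) * inverse (real d ^ (2 * card (A 1 - (\<Union>i\<in>{2..n}. A i)))))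
      = (\<Sum>f \<in> PiE D (\<lambda>_. Pow I). (\<Prod>i\<in>I. sigma_sq c N (tr I D f i)) * inverse (real d ^ (2 * card (tr I D f 1 - (\<Union>i\<in>{2..n}. tr I D f i)))))"
    by (rule sum_tr[OF finI finD, where g = "\<lambda>A. (\<Prod>i\<in>I. sigma_sq c N (A i)) * inverse (real d ^ (2 * card (A 1 - (\<Union>i\<in>{2..n}. A i))))"])
  also have "\<dots> = (\<Sum>f \<in> PiE D (\<lambda>_. Pow I). \<Prod>e\<in>D. h (f e))"
  proof (intro sum.cong refl)
    fix f assume f: "f \<in> PiE D (\<lambda>_. Pow I)"
    have a: "(\<Prod>i\<in>I. sigma_sq c N (tr I D f i)) = (\<Prod>e\<in>D. mu p n (f e))"
      using prod_tr[OF finI finD f, of p] by (simp add: sigma_mu p_def D_def I_def)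
    have set: "tr I D f 1 - (\<Union>i\<in>{2..n}. tr I D f i) = {e\<in>D. f e = {1}}"
    proof -
      have fe: "f e \<subseteq> {1..n}" if "e \<in> D" for e using f that by (auto simp: I_def)
      have tri: "tr I D f i = {e\<in>D. i \<in> f e}" if "i \<in> {1..n}" for i
        using that by (simp add: tr_def I_def)
      have "e \<in> tr I D f 1 - (\<Union>i\<in>{2..n}. tr I D f i) \<longleftrightarrow> e \<in> {e\<in>D. f e = {1}}" for e
      proof
        assume "e \<in> tr I D f 1 - (\<Union>i\<in>{2..n}. tr I D f i)"
        hence e: "e \<in> D" "1 \<in> f e" and no: "\<forall>i\<in>{2..n}. i \<notin> f e"
          using tri[of 1] tri n1 by auto
        have "x = 1" if "x \<in> f e" for x
        proof (rule ccontr)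
          assume "x \<noteq> 1"
          moreover have "x \<in> {1..n}" using fe[OF e(1)] that by blast
          ultimately have "x \<in> {2..n}" by (simp add: Suc_le_eq)
          thus False using no that by auto
        qed
        hence "f e = {1}" using e(2) by blast
        thus "e \<in> {e\<in>D. f e = {1}}" using e(1) by simp
      next
        assume "e \<in> {e\<in>D. f e = {1}}"
        thus "e \<in> tr I D f 1 - (\<Union>i\<in>{2..n}. tr I D f i)"
          using tri[of 1] tri n1 by auto
      qed
      thus ?thesis by (rule set_eqI)
    qed
    have b: "inverse (real d ^ (2 * card {e\<in>D. f e = {1}})) = (\<Prod>e\<in>D. if f e = {1} then r else 1)"
      using finD by (simp add: prod.If_cases r_def power_mult power_inverse Int_def)
    show "(\<Prod>i\<in>I. sigma_sq c N (tr I D f i)) * inverse (real d ^ (2 * card (tr I D f 1 - (\<Union>i\<in>{2..n}. tr I D f i))))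
        = (\<Prod>e\<in>D. h (f e))"
      unfolding a set b h_def by (simp add: prod.distrib)
  qed
  also have "\<dots> = (\<Sum>S\<in>Pow I. h S) ^ N"
    using sum_PiE_prod[OF finD, of "Pow I" h] finI by (simp add: D_def)
  also have "(\<Sum>S\<in>Pow I. h S) = (\<Sum>S\<in>Pow I. mu p n S) + mu p n {1} * (r - 1)"
  proof -
    have "(\<Sum>S\<in>Pow I. h S) = (\<Sum>S\<in>Pow I. mu p n S + (if S = {1} then mu p n {1} * (r - 1) else 0))"
      by (intro sum.cong refl) (auto simp: h_def algebra_simps)
    also have "\<dots> = (\<Sum>S\<in>Pow I. mu p n S) + mu p n {1} * (r - 1)"
      using finI 1 by (simp add: sum.distrib)
    finally show ?thesis .
  qed
  also have "(\<Sum>S\<in>Pow I. mu p n S) = 1"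
    using binom_sum1[OF finI, of p] by (simp add: mu_def I_def)
  also have "mu p n {1} = p * (1 - p) ^ (n - 1)" by (simp add: mu_def)
  finally show ?thesis by (simp add: I_def D_def r_def algebra_simps)
qed




lemma lim_exp_sqrt:
  assumes "c > 0"
  shows "(\<lambda>N::nat. exp (- (3/8 * c * sqrt (real N)))) \<longlonglongrightarrow> 0"
  using assms by real_asymp

lemma part4:
  fixes d :: nat and c :: real and n :: nat
  assumes d2: "d \<ge> 2" and c0: "c > 0" and n1: "n \<ge> 1"
  shows "(\<lambda>N::nat. \<Sum>A \<in> PiE {1..n} (\<lambda>_. Pow {1..N}).
             (\<Prod>i\<in>{1..n}. sigma_sq c N (A i))
             * inverse (real d ^ (2 * card (A 1 - (\<Union>i\<in>{2..n}. A i)))))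
         \<longlonglongrightarrow> 0"
proof -
  define r where "r = inverse (real d ^ 2)"
  have r: "0 \<le> r" "r \<le> 1/4"
  proof -
    have "real d ^ 2 \<ge> 2 ^ 2" using d2 by (intro power_mono) auto
    thus "0 \<le> r" "r \<le> 1/4" by (auto simp: r_def field_simps divide_le_eq_1)
  qed
  have lim1: "(\<lambda>N::nat. (1 - c / sqrt (real N)) ^ (n - 1)) \<longlonglongrightarrow> (1 - 0) ^ (n - 1)"
    by (intro tendsto_intros lim_p)
  have ev_half: "\<forall>\<^sub>F N in sequentially. (1 - c / sqrt (real N)) ^ (n - 1) > 1/2"
    using order_tendstoD(1)[OF lim1, of "1/2"] by simp
  have ev: "\<forall>\<^sub>F N in sequentially.
      (1 - c / sqrt (real N) * (1 - c / sqrt (real N)) ^ (n - 1) * (1 - r)) ^ N \<le> exp (- (3/8 * c * sqrt (real N)))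
    \<and> 0 \<le> (1 - c / sqrt (real N) * (1 - c / sqrt (real N)) ^ (n - 1) * (1 - r)) ^ N"
    using ev_half ev_big[of c] eventually_gt_at_top[of 0]
  proof eventually_elim
    case (elim N)
    define p where "p = c / sqrt (real N)"
    define q where "q = (1 - p) ^ (n - 1)"
    have p01: "0 \<le> p" "p \<le> 1" using p_bounds[OF c0 elim(2)] by (auto simp: p_def)
    have q: "1/2 < q" "q \<le> 1" using elim(1) p01 by (auto simp: q_def p_def power_le_one)
    define y where "y = p * q * (1 - r)"
    have y0: "0 \<le> y" using p01 q r by (auto simp: y_def)
    have y1: "y \<le> 1" using p01 q r by (auto simp: y_def intro!: mult_le_one)
    have Ny: "real N * y \<ge> 3/8 * c * sqrt (real N)"
    proof -
      have Np: "real N * p = c * sqrt (real N)"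
        using elim(3) by (simp add: p_def field_simps real_sqrt_mult[symmetric])
      have "real N * y = (c * sqrt (real N)) * (q * (1 - r))" by (simp add: y_def Np[symmetric] mult_ac)
      moreover have "q * (1 - r) \<ge> 1/2 * (3/4)" using q r by (intro mult_mono) auto
      moreover have "c * sqrt (real N) \<ge> 0" using c0 by simp
      ultimately have "c * sqrt (real N) * (1/2 * (3/4)) \<le> real N * y"
        by (metis mult_left_mono)
      thus ?thesis by simp
    qed
    have "(1 - y) ^ N \<le> exp (- y) ^ N"
      by (intro power_mono) (use y1 exp_ge_add_one_self[of "-y"] in auto)
    also have "\<dots> = exp (- (real N * y))" by (simp add: exp_of_nat_mult[symmetric])
    also have "\<dots> \<le> exp (- (3/8 * c * sqrt (real N)))" using Ny by simp
    finally show ?case using y1 by (simp add: y_def q_def p_def)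
  qed
  have "(\<lambda>N::nat. (1 - c / sqrt (real N) * (1 - c / sqrt (real N)) ^ (n - 1) * (1 - r)) ^ N) \<longlonglongrightarrow> 0"
    by (rule tendsto_sandwich[OF _ _ tendsto_const lim_exp_sqrt[OF c0]]) (use ev in \<open>auto elim: eventually_mono\<close>)
  thus ?thesis unfolding part4_eq[OF n1] r_def .
qed




definition Jset :: "nat \<Rightarrow> nat set set" where "Jset k = {S. S \<subseteq> {1..k} \<and> card S = 2}"
definition Oset :: "nat \<Rightarrow> nat set set" where "Oset k = {S. S \<subseteq> {1..k} \<and> card S \<le> 1}"
definition W2 :: "nat \<Rightarrow> nat set set" where "W2 k = {S. S \<subseteq> {1..k} \<and> card S \<le> 2}"
definition nn :: "(nat \<Rightarrow> nat \<Rightarrow> nat) \<Rightarrow> nat set \<Rightarrow> nat" where "nn n S = n (Min S) (Max S)"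
definition condA :: "nat \<Rightarrow> (nat \<Rightarrow> nat \<Rightarrow> nat) \<Rightarrow> (nat \<Rightarrow> nat set) \<Rightarrow> bool" where
  "condA k n A = (\<forall>i j. 1 \<le> i \<and> i < j \<and> j \<le> k \<longrightarrow> card (A i \<inter> A j) = n i j)"

lemma finite_Jset: "finite (Jset k)" and finite_Oset: "finite (Oset k)" and finite_W2: "finite (W2 k)"
  by (auto simp: Jset_def Oset_def W2_def intro: finite_subset[of _ "Pow {1..k}"])

lemma W2_eq: "W2 k = Jset k \<union> Oset k" by (auto simp: W2_def Jset_def Oset_def)
lemma JO_disj: "Jset k \<inter> Oset k = {}" by (auto simp: Jset_def Oset_def)

lemma Jset_elem:
  assumes "S \<in> Jset k"
  obtains a b where "S = {a, b}" "a < b" "1 \<le> a" "b \<le> k"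
proof -
  from assms have S: "S \<subseteq> {1..k}" "card S = 2" by (auto simp: Jset_def)
  then obtain x y where xy: "S = {x, y}" "x \<noteq> y" by (auto simp: card_2_iff)
  show ?thesis
  proof (cases "x < y")
    case True thus ?thesis using that xy S by auto
  next
    case False
    hence "y < x" using xy by simp
    moreover have "S = {y, x}" using xy by auto
    ultimately show ?thesis using that S by auto
  qed
qed

lemma MinMax2: "a < (b::nat) \<Longrightarrow> Min {a, b} = a \<and> Max {a, b} = b"
  by auto

lemma card_inter_tr:
  assumes f: "f \<in> PiE D (\<lambda>_. W2 k)" and ij: "i < j" "1 \<le> i" "j \<le> k"
  shows "card (tr {1..k} D f i \<inter> tr {1..k} D f j) = card {e\<in>D. f e = {i, j}}"
proof -
  have "tr {1..k} D f i \<inter> tr {1..k} D f j = {e\<in>D. f e = {i, j}}"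
  proof (intro set_eqI iffI)
    fix e assume "e \<in> tr {1..k} D f i \<inter> tr {1..k} D f j"
    hence e: "e \<in> D" "i \<in> f e" "j \<in> f e" using ij by (auto simp: tr_def)
    have fe: "f e \<subseteq> {1..k}" "card (f e) \<le> 2" using f e(1) by (auto simp: W2_def)
    have "{i, j} \<subseteq> f e" using e by auto
    moreover have "card {i, j} = 2" using ij by auto
    moreover have "finite (f e)" using fe finite_subset by blast
    ultimately have "{i, j} = f e" using fe by (intro card_seteq) auto
    thus "e \<in> {e\<in>D. f e = {i, j}}" using e by auto
  next
    fix e assume "e \<in> {e\<in>D. f e = {i, j}}"
    thus "e \<in> tr {1..k} D f i \<inter> tr {1..k} D f j" using ij by (auto simp: tr_def)
  qed
  thus ?thesis by simp
qed

lemma condA_tr: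
  assumes f: "f \<in> PiE D (\<lambda>_. W2 k)"
  shows "condA k n (tr {1..k} D f) \<longleftrightarrow> (\<forall>S\<in>Jset k. card {e\<in>D. f e = S} = nn n S)"
proof
  assume c: "condA k n (tr {1..k} D f)"
  show "\<forall>S\<in>Jset k. card {e\<in>D. f e = S} = nn n S"
  proof
    fix S assume "S \<in> Jset k"
    then obtain a b where ab: "S = {a, b}" "a < b" "1 \<le> a" "b \<le> k" by (rule Jset_elem)
    have "card (tr {1..k} D f a \<inter> tr {1..k} D f b) = n a b" using c ab by (auto simp: condA_def)
    thus "card {e\<in>D. f e = S} = nn n S"
      using card_inter_tr[OF f ab(2,3,4)] ab MinMax2[OF ab(2)] by (simp add: nn_def)
  qed
next
  assume c: "\<forall>S\<in>Jset k. card {e\<in>D. f e = S} = nn n S"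
  show "condA k n (tr {1..k} D f)" unfolding condA_def
  proof (intro allI impI)
    fix i j assume ij: "1 \<le> i \<and> i < j \<and> j \<le> k"
    have "{i, j} \<in> Jset k" using ij by (auto simp: Jset_def)
    hence "card {e\<in>D. f e = {i, j}} = n i j" using c MinMax2[of i j] ij by (auto simp: nn_def)
    thus "card (tr {1..k} D f i \<inter> tr {1..k} D f j) = n i j"
      using card_inter_tr[OF f, of i j] ij by simp
  qed
qed

lemma X_eq:
  fixes p :: real
  shows "(\<Sum>f\<in>PiE {1..N} (\<lambda>_. W2 k). if condA k n (tr {1..k} {1..N} f) then \<Prod>e\<in>{1..N}. mu p k (f e) else 0)
    = mcoef N (Jset k) (nn n) * (p ^ 2 * (1 - p) ^ (k - 2)) ^ sum (nn n) (Jset k)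
      * (\<Sum>S\<in>Oset k. mu p k S) ^ (N - sum (nn n) (Jset k))"
proof -
  have "(\<Sum>f\<in>PiE {1..N} (\<lambda>_. W2 k). if condA k n (tr {1..k} {1..N} f) then \<Prod>e\<in>{1..N}. mu p k (f e) else 0)
     = (\<Sum>f\<in>{f\<in>PiE {1..N} (\<lambda>_. Jset k \<union> Oset k). \<forall>S\<in>Jset k. card {e\<in>{1..N}. f e = S} = nn n S}. \<Prod>e\<in>{1..N}. mu p k (f e))"
  proof -
    have "(\<Sum>f\<in>PiE {1..N} (\<lambda>_. W2 k). if condA k n (tr {1..k} {1..N} f) then \<Prod>e\<in>{1..N}. mu p k (f e) else 0)
      = (\<Sum>f\<in>{f\<in>PiE {1..N} (\<lambda>_. W2 k). condA k n (tr {1..k} {1..N} f)}. \<Prod>e\<in>{1..N}. mu p k (f e))"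
      by (rule sum.inter_filter[symmetric]) (simp add: finite_W2 finite_PiE)
    also have "{f\<in>PiE {1..N} (\<lambda>_. W2 k). condA k n (tr {1..k} {1..N} f)}
       = {f\<in>PiE {1..N} (\<lambda>_. Jset k \<union> Oset k). \<forall>S\<in>Jset k. card {e\<in>{1..N}. f e = S} = nn n S}"
    proof (intro set_eqI iffI)
      fix f assume "f \<in> {f\<in>PiE {1..N} (\<lambda>_. W2 k). condA k n (tr {1..k} {1..N} f)}"
      hence f: "f \<in> PiE {1..N} (\<lambda>_. W2 k)" "condA k n (tr {1..k} {1..N} f)" by auto
      show "f \<in> {f\<in>PiE {1..N} (\<lambda>_. Jset k \<union> Oset k). \<forall>S\<in>Jset k. card {e\<in>{1..N}. f e = S} = nn n S}"
        using f condA_tr[OF f(1), of n] unfolding W2_eq by blast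
    next
      fix f assume "f \<in> {f\<in>PiE {1..N} (\<lambda>_. Jset k \<union> Oset k). \<forall>S\<in>Jset k. card {e\<in>{1..N}. f e = S} = nn n S}"
      hence f: "f \<in> PiE {1..N} (\<lambda>_. W2 k)" "\<forall>S\<in>Jset k. card {e\<in>{1..N}. f e = S} = nn n S"
        unfolding W2_eq by auto
      show "f \<in> {f\<in>PiE {1..N} (\<lambda>_. W2 k). condA k n (tr {1..k} {1..N} f)}"
        using f condA_tr[OF f(1), of n] by blast
    qed
    finally show ?thesis .
  qed
  also have "\<dots> = mcoef (card {1..N}) (Jset k) (nn n) * (\<Prod>j\<in>Jset k. mu p k j ^ nn n j) * (\<Sum>S\<in>Oset k. mu p k S) ^ (card {1..N} - sum (nn n) (Jset k))"
    by (rule multi[OF finite_Jset finite_Oset JO_disj]) simp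
  also have "(\<Prod>j\<in>Jset k. mu p k j ^ nn n j) = (\<Prod>j\<in>Jset k. (p ^ 2 * (1 - p) ^ (k - 2)) ^ nn n j)"
    by (intro prod.cong refl) (auto simp: mu_def Jset_def)
  also have "\<dots> = (p ^ 2 * (1 - p) ^ (k - 2)) ^ sum (nn n) (Jset k)"
    by (simp add: power_sum)
  finally show ?thesis by simp
qed




definition Yt :: "real \<Rightarrow> nat \<Rightarrow> (nat \<Rightarrow> nat \<Rightarrow> nat) \<Rightarrow> nat \<Rightarrow> real" where
  "Yt p k n N = (\<Sum>f\<in>PiE {1..N} (\<lambda>_. Pow {1..k}) - PiE {1..N} (\<lambda>_. W2 k).
      if condA k n (tr {1..k} {1..N} f) then \<Prod>e\<in>{1..N}. mu p k (f e) else 0)"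

lemma S3_split:
  "(\<Sum>A \<in> {A \<in> PiE {1..k} (\<lambda>_. Pow {1..N}).
                    \<forall>i j. 1 \<le> i \<and> i < j \<and> j \<le> k \<longrightarrow> card (A i \<inter> A j) = n i j}.
             \<Prod>i\<in>{1..k}. sigma_sq c N (A i))
   = (\<Sum>f\<in>PiE {1..N} (\<lambda>_. W2 k). if condA k n (tr {1..k} {1..N} f) then \<Prod>e\<in>{1..N}. mu (c / sqrt (real N)) k (f e) else 0)
     + Yt (c / sqrt (real N)) k n N"
proof -
  define I where "I = {1..k}"
  define D where "D = {1..N}"
  define p where "p = c / sqrt (real N)"
  have finI: "finite I" and finD: "finite D" by (auto simp: I_def D_def)
  have "(\<Sum>A \<in> {A \<in> PiE I (\<lambda>_. Pow D). condA k n A}. \<Prod>i\<in>I. sigma_sq c N (A i))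
      = (\<Sum>A \<in> PiE I (\<lambda>_. Pow D). if condA k n A then \<Prod>i\<in>I. sigma_sq c N (A i) else 0)"
    by (rule sum.inter_filter) (simp add: finI finD finite_PiE)
  also have "\<dots> = (\<Sum>f \<in> PiE D (\<lambda>_. Pow I). if condA k n (tr I D f) then \<Prod>i\<in>I. sigma_sq c N (tr I D f i) else 0)"
    by (rule sum_tr[OF finI finD, where g = "\<lambda>A. if condA k n A then \<Prod>i\<in>I. sigma_sq c N (A i) else 0"])
  also have "\<dots> = (\<Sum>f \<in> PiE D (\<lambda>_. Pow I). if condA k n (tr I D f) then \<Prod>e\<in>D. mu p k (f e) else 0)"
  proof (intro sum.cong refl)
    fix f assume f: "f \<in> PiE D (\<lambda>_. Pow I)"
    have "(\<Prod>i\<in>I. sigma_sq c N (tr I D f i)) = (\<Prod>e\<in>D. mu p k (f e))"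
      using prod_tr[OF finI finD f, of p] by (simp add: sigma_mu p_def D_def I_def)
    thus "(if condA k n (tr I D f) then \<Prod>i\<in>I. sigma_sq c N (tr I D f i) else 0) = (if condA k n (tr I D f) then \<Prod>e\<in>D. mu p k (f e) else 0)"
      by simp
  qed
  also have "\<dots> = (\<Sum>f \<in> PiE D (\<lambda>_. W2 k). if condA k n (tr I D f) then \<Prod>e\<in>D. mu p k (f e) else 0)
       + Yt p k n N"
  proof -
    have sub: "PiE D (\<lambda>_. W2 k) \<subseteq> PiE D (\<lambda>_. Pow I)" by (auto simp: W2_def I_def PiE_def Pi_def)
    have fin: "finite (PiE D (\<lambda>_. Pow I))" using finI finD by (simp add: finite_PiE)
    show ?thesis unfolding Yt_def I_def[symmetric] D_def[symmetric]
      using sum.subset_diff[OF sub fin, where g = "\<lambda>f. if condA k n (tr I D f) then \<Prod>e\<in>D. mu p k (f e) else 0"] by simp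
  qed
  finally show ?thesis unfolding I_def D_def p_def condA_def .
qed

lemma mu_nonneg: "0 \<le> p \<Longrightarrow> p \<le> 1 \<Longrightarrow> 0 \<le> mu p k S"
  by (simp add: mu_def)

lemma y_bounds:
  fixes p :: real
  assumes p: "0 \<le> p" "p \<le> 1"
  shows "0 \<le> 1 - (\<Sum>S\<in>W2 k. mu p k S)" "1 - (\<Sum>S\<in>W2 k. mu p k S) \<le> 2 ^ k * p ^ 3"
proof -
  have sub: "W2 k \<subseteq> Pow {1..k}" by (auto simp: W2_def)
  have "(\<Sum>S\<in>Pow {1..k}. mu p k S) = 1" using binom_sum1[of "{1..k}" p] by (simp add: mu_def)
  hence eq: "1 - (\<Sum>S\<in>W2 k. mu p k S) = (\<Sum>S\<in>Pow {1..k} - W2 k. mu p k S)"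
    using sum.subset_diff[OF sub, where g = "mu p k"] by simp
  show "0 \<le> 1 - (\<Sum>S\<in>W2 k. mu p k S)" unfolding eq by (intro sum_nonneg mu_nonneg p)
  have "(\<Sum>S\<in>Pow {1..k} - W2 k. mu p k S) \<le> (\<Sum>S\<in>Pow {1..k} - W2 k. p ^ 3)"
  proof (intro sum_mono)
    fix S assume S: "S \<in> Pow {1..k} - W2 k"
    hence c3: "card S \<ge> 3" by (auto simp: W2_def)
    have "p ^ card S \<le> p ^ 3" using p c3 by (intro power_decreasing) auto
    moreover have "(1 - p) ^ (k - card S) \<le> 1" using p by (intro power_le_one) auto
    ultimately show "mu p k S \<le> p ^ 3" unfolding mu_def using p
      by (metis mult_le_one mult_mono mult_nonneg_nonneg mult.right_neutral zero_le_power diff_ge_0_iff_ge)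
  qed
  also have "\<dots> = real (card (Pow {1..k} - W2 k)) * p ^ 3" by simp
  also have "\<dots> \<le> 2 ^ k * p ^ 3"
  proof (intro mult_right_mono)
    have "card (Pow {1..k} - W2 k) \<le> card (Pow {1..k::nat})" by (intro card_mono) auto
    also have "\<dots> = 2 ^ k" by (simp add: card_Pow)
    finally show "real (card (Pow {1..k} - W2 k)) \<le> 2 ^ k" by (metis of_nat_le_iff of_nat_numeral of_nat_power)
  qed (use p in auto)
  finally show "1 - (\<Sum>S\<in>W2 k. mu p k S) \<le> 2 ^ k * p ^ 3" unfolding eq .
qed

lemma Y_bounds:
  fixes p :: real
  assumes p: "0 \<le> p" "p \<le> 1"
  shows "0 \<le> Yt p k n N" "Yt p k n N \<le> real N * (2 ^ k * p ^ 3)"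
proof -
  define D where "D = {1..N}"
  define Fa where "Fa = PiE D (\<lambda>_. Pow {1..k})"
  define F2 where "F2 = PiE D (\<lambda>_. W2 k)"
  define y where "y = 1 - (\<Sum>S\<in>W2 k. mu p k S)"
  have yb: "0 \<le> y" "y \<le> 2 ^ k * p ^ 3" using y_bounds[OF p, of k] by (auto simp: y_def)
  have y1: "y \<le> 1" using sum_nonneg[of "W2 k" "mu p k"] mu_nonneg[OF p] by (simp add: y_def)
  have pn: "0 \<le> (\<Prod>e\<in>D. mu p k (f e))" for f by (intro prod_nonneg mu_nonneg p)
  show "0 \<le> Yt p k n N" unfolding Yt_def by (intro sum_nonneg) (use pn in \<open>auto simp: D_def\<close>)
  have sub: "F2 \<subseteq> Fa" by (auto simp: W2_def Fa_def F2_def PiE_def Pi_def)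
  have finD: "finite D" by (simp add: D_def)
  have fin: "finite Fa" by (simp add: Fa_def finD finite_PiE)
  have "Yt p k n N \<le> (\<Sum>f\<in>Fa - F2. \<Prod>e\<in>D. mu p k (f e))"
    unfolding Yt_def D_def[symmetric] Fa_def[symmetric] F2_def[symmetric] by (intro sum_mono) (use pn in auto)
  also have "\<dots> = (\<Sum>f\<in>Fa. \<Prod>e\<in>D. mu p k (f e)) - (\<Sum>f\<in>F2. \<Prod>e\<in>D. mu p k (f e))"
    using sum.subset_diff[OF sub fin, where g = "\<lambda>f. \<Prod>e\<in>D. mu p k (f e)"] by simp
  also have "(\<Sum>f\<in>Fa. \<Prod>e\<in>D. mu p k (f e)) = 1"
    unfolding Fa_def using sum_PiE_prod[OF finD, of "Pow {1..k}" "mu p k"] binom_sum1[of "{1..k}" p]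
    by (simp add: mu_def)
  also have "(\<Sum>f\<in>F2. \<Prod>e\<in>D. mu p k (f e)) = (1 - y) ^ N"
    unfolding F2_def using sum_PiE_prod[OF finD, of "W2 k" "mu p k"] by (simp add: finite_W2 y_def D_def)
  also have "1 - (1 - y) ^ N \<le> real N * y"
    using Bernoulli_inequality[of "- y" N] y1 by simp
  also have "\<dots> \<le> real N * (2 ^ k * p ^ 3)" using yb by (intro mult_left_mono) auto
  finally show "Yt p k n N \<le> real N * (2 ^ k * p ^ 3)" .
qed




lemma X_lim:
  fixes c :: real and k :: nat and n :: "nat \<Rightarrow> nat \<Rightarrow> nat"
  assumes c0: "c > 0"
  defines "J \<equiv> Jset k"
  defines "M \<equiv> sum (nn n) (Jset k)"
  shows "(\<lambda>N. mcoef N J (nn n) * ((c / sqrt (real N)) ^ 2 * (1 - c / sqrt (real N)) ^ (k - 2)) ^ M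
      * (\<Sum>S\<in>Oset k. mu (c / sqrt (real N)) k S) ^ (N - M))
    \<longlonglongrightarrow> ((c^2) ^ M / (\<Prod>S\<in>J. fact (nn n S))) * exp (- (real (card J) * c^2))"
proof -
  define p where "p = (\<lambda>N::nat. c / sqrt (real N))"
  define m2 where "m2 = (\<lambda>N. p N ^ 2 * (1 - p N) ^ (k - 2))"
  define y where "y = (\<lambda>N. 1 - (\<Sum>S\<in>W2 k. mu (p N) k S))"
  define base where "base = (\<lambda>N. \<Sum>S\<in>Oset k. mu (p N) k S)"
  define z where "z = (\<lambda>N. real N * y N + real (card J) * (real N * m2 N))"
  define PF where "PF = (\<Prod>S\<in>J. fact (nn n S) :: real)"
  define L where "L = real (card J) * c^2"
  have PF0: "PF > 0" unfolding PF_def by (intro prod_pos) auto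
  have lp: "p \<longlonglongrightarrow> 0" unfolding p_def by (rule lim_p)
  have ev_p: "\<forall>\<^sub>F N in sequentially. 0 \<le> p N \<and> p N \<le> 1"
    using ev_big[of c] by eventually_elim (use p_bounds[OF c0] in \<open>auto simp: p_def\<close>)
  have Nm2: "(\<lambda>N. real N * m2 N) \<longlonglongrightarrow> c^2"
  proof -
    have l: "(\<lambda>N. c^2 * (1 - p N) ^ (k - 2)) \<longlonglongrightarrow> c^2 * (1 - 0) ^ (k - 2)"
      by (intro tendsto_intros lp)
    have "\<forall>\<^sub>F N in sequentially. c^2 * (1 - p N) ^ (k - 2) = real N * m2 N"
      using lim_p2[of c] by eventually_elim (simp add: m2_def p_def mult.assoc)
    from Lim_transform_eventually[OF l this] show ?thesis by simp
  qed
  have m2_0: "m2 \<longlonglongrightarrow> 0"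
  proof -
    have "(\<lambda>N. p N ^ 2 * (1 - p N) ^ (k - 2)) \<longlonglongrightarrow> 0 ^ 2 * (1 - 0) ^ (k - 2)"
      by (intro tendsto_intros lp)
    thus ?thesis by (simp add: m2_def)
  qed
  have Ny: "(\<lambda>N. real N * y N) \<longlonglongrightarrow> 0"
  proof (rule tendsto_sandwich[OF _ _ tendsto_const])
    show "(\<lambda>N. 2 ^ k * (real N * (c / sqrt (real N))^3)) \<longlonglongrightarrow> 0"
      using tendsto_mult[OF tendsto_const[of "2 ^ k"] lim_p3[of c]] by simp
    show "\<forall>\<^sub>F N in sequentially. 0 \<le> real N * y N"
      using ev_p by eventually_elim (use y_bounds in \<open>auto simp: y_def\<close>)
    show "\<forall>\<^sub>F N in sequentially. real N * y N \<le> 2 ^ k * (real N * (c / sqrt (real N))^3)"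
      using ev_p
    proof eventually_elim
      case (elim N)
      have "y N \<le> 2 ^ k * p N ^ 3" using y_bounds(2)[of "p N" k] elim by (simp add: y_def)
      hence "real N * y N \<le> real N * (2 ^ k * p N ^ 3)" by (intro mult_left_mono) auto
      thus ?case by (simp add: p_def mult_ac)
    qed
  qed
  have zlim: "z \<longlonglongrightarrow> 0 + real (card J) * c^2"
    unfolding z_def by (intro tendsto_intros Ny Nm2)
  have z_nn: "\<forall>\<^sub>F N in sequentially. z N \<ge> 0"
    using ev_p
  proof eventually_elim
    case (elim N)
    have "y N \<ge> 0" using y_bounds(1)[of "p N" k] elim by (simp add: y_def)
    moreover have "m2 N \<ge> 0" using elim by (simp add: m2_def)
    ultimately show ?case by (simp add: z_def)
  qed
  have base_eq: "\<forall>\<^sub>F N in sequentially. base N = 1 - z N / real N"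
    using eventually_gt_at_top[of 0]
  proof eventually_elim
    case (elim N)
    have "(\<Sum>S\<in>W2 k. mu (p N) k S) = (\<Sum>S\<in>Jset k. mu (p N) k S) + base N"
      unfolding W2_eq base_def by (rule sum.union_disjoint) (auto simp: finite_Jset finite_Oset JO_disj)
    moreover have "(\<Sum>S\<in>Jset k. mu (p N) k S) = real (card J) * m2 N"
      unfolding J_def m2_def by (subst sum.cong[OF refl, of _ _ "\<lambda>_. p N ^ 2 * (1 - p N) ^ (k - 2)"]) (auto simp: mu_def Jset_def)
    ultimately have "base N = 1 - y N - real (card J) * m2 N" by (simp add: y_def)
    moreover have "z N / real N = y N + real (card J) * m2 N" using elim by (simp add: z_def field_simps)
    ultimately show ?case by simp
  qed
  have bN: "(\<lambda>N. base N ^ N) \<longlonglongrightarrow> exp (- L)"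
  proof -
    have "(\<lambda>N. (1 - z N / real N) ^ N) \<longlonglongrightarrow> exp (- (0 + real (card J) * c^2))"
      by (rule lim_exp[OF zlim z_nn])
    moreover have "\<forall>\<^sub>F N in sequentially. (1 - z N / real N) ^ N = base N ^ N"
      using base_eq by eventually_elim simp
    ultimately show ?thesis unfolding L_def by (simp add: Lim_transform_eventually)
  qed
  have b1: "base \<longlonglongrightarrow> 1"
  proof -
    have zN: "(\<lambda>N. z N / real N) \<longlonglongrightarrow> (0 + real (card J) * c^2) * 0"
      using tendsto_mult[OF zlim lim_inverse_n'] by (simp add: divide_inverse)
    have "(\<lambda>N. 1 - z N / real N) \<longlonglongrightarrow> 1 - (0 + real (card J) * c^2) * 0"
      by (intro tendsto_intros zN)
    moreover have "\<forall>\<^sub>F N in sequentially. 1 - z N / real N = base N"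
      using base_eq by eventually_elim simp
    ultimately show ?thesis by (simp add: Lim_transform_eventually)
  qed
  have bM: "(\<lambda>N. base N ^ M) \<longlonglongrightarrow> 1" using tendsto_power[OF b1, of M] by simp
  have g: "(\<lambda>N. base N ^ N / base N ^ M) \<longlonglongrightarrow> exp (- L) / 1"
    by (intro tendsto_divide bN bM) simp
  have a: "(\<lambda>N. fact N / (fact (N - M) * real N ^ M) :: real) \<longlonglongrightarrow> 1" by (rule lim_fact_ratio)
  have b: "(\<lambda>N. (real N * m2 N) ^ M) \<longlonglongrightarrow> (c^2) ^ M" by (intro tendsto_intros Nm2)
  have all: "(\<lambda>N. (fact N / (fact (N - M) * real N ^ M)) * (real N * m2 N) ^ M / PF * (base N ^ N / base N ^ M))
      \<longlonglongrightarrow> 1 * (c^2) ^ M / PF * (exp (- L) / 1)"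
    by (intro tendsto_intros a b g) (use PF0 in auto)
  have ev: "\<forall>\<^sub>F N in sequentially. (fact N / (fact (N - M) * real N ^ M)) * (real N * m2 N) ^ M / PF * (base N ^ N / base N ^ M)
      = mcoef N J (nn n) * m2 N ^ M * base N ^ (N - M)"
  proof -
    have hb: "\<forall>\<^sub>F N in sequentially. base N > 1/2" using order_tendstoD(1)[OF b1, of "1/2"] by simp
    show ?thesis using eventually_ge_at_top[of "max M 1"] hb
  proof eventually_elim
    case (elim N)
    hence MN: "M \<le> N" and N0: "real N > 0" and bpos: "base N > 1/2" by auto
    have e1: "base N ^ (N - M) = base N ^ N / base N ^ M" using MN bpos by (simp add: power_diff)
    have e2: "mcoef N J (nn n) = fact N / (fact (N - M) * PF)"
      using MN by (simp add: mcoef_def M_def J_def PF_def)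
    have e3: "(real N * m2 N) ^ M = real N ^ M * m2 N ^ M" by (simp add: power_mult_distrib)
    have nz: "real N ^ M \<noteq> 0" "(fact (N - M) :: real) \<noteq> 0" "PF \<noteq> 0" using N0 PF0 by auto
    show ?case unfolding e1 e2 e3 using nz N0 by (simp add: field_simps)
  qed
  qed
  have "(\<lambda>N. mcoef N J (nn n) * m2 N ^ M * base N ^ (N - M)) \<longlonglongrightarrow> 1 * (c^2) ^ M / PF * (exp (- L) / 1)"
    using Lim_transform_eventually[OF all ev] .
  thus ?thesis by (simp add: m2_def p_def base_def PF_def L_def)
qed




lemma pairs_bij: "bij_betw (\<lambda>(i, j). {i, j}) {(i, j). 1 \<le> i \<and> i < j \<and> j \<le> k} (Jset k)"
proof (rule bij_betw_byWitness[where f' = "\<lambda>S. (Min S, Max S)"])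
  show "\<forall>a\<in>{(i, j). 1 \<le> i \<and> i < j \<and> j \<le> k}. (\<lambda>S. (Min S, Max S)) ((\<lambda>(i, j). {i, j}) a) = a"
    using MinMax2 by auto
  show "\<forall>a'\<in>Jset k. (\<lambda>(i, j). {i, j}) ((\<lambda>S. (Min S, Max S)) a') = a'"
  proof
    fix S assume "S \<in> Jset k"
    then obtain a b where ab: "S = {a, b}" "a < b" "1 \<le> a" "b \<le> k" by (rule Jset_elem)
    thus "(\<lambda>(i, j). {i, j}) ((\<lambda>S. (Min S, Max S)) S) = S" using MinMax2[OF ab(2)] by simp
  qed
  show "(\<lambda>(i, j). {i, j}) ` {(i, j). 1 \<le> i \<and> i < j \<and> j \<le> k} \<subseteq> Jset k"
    by (auto simp: Jset_def)
  show "(\<lambda>S. (Min S, Max S)) ` Jset k \<subseteq> {(i, j). 1 \<le> i \<and> i < j \<and> j \<le> k}"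
  proof
    fix x assume "x \<in> (\<lambda>S. (Min S, Max S)) ` Jset k"
    then obtain S where S: "S \<in> Jset k" and x: "x = (Min S, Max S)" by auto
    obtain a b where ab: "S = {a, b}" "a < b" "1 \<le> a" "b \<le> k" using S by (rule Jset_elem)
    thus "x \<in> {(i, j). 1 \<le> i \<and> i < j \<and> j \<le> k}" using MinMax2[OF ab(2)] x by simp
  qed
qed

lemma target_eq:
  "(\<Prod>(i, j) \<in> {(i, j). 1 \<le> i \<and> i < j \<and> j \<le> k}. pois c (n i j))
   = ((c^2) ^ sum (nn n) (Jset k) / (\<Prod>S\<in>Jset k. fact (nn n S))) * exp (- (real (card (Jset k)) * c^2))"
proof -
  have "(\<Prod>(i, j) \<in> {(i, j). 1 \<le> i \<and> i < j \<and> j \<le> k}. pois c (n i j))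
      = (\<Prod>x \<in> {(i, j). 1 \<le> i \<and> i < j \<and> j \<le> k}. pois c (nn n ((\<lambda>(i, j). {i, j}) x)))"
    by (intro prod.cong refl) (auto simp: nn_def MinMax2)
  also have "\<dots> = (\<Prod>S\<in>Jset k. pois c (nn n S))"
    by (rule prod.reindex_bij_betw[OF pairs_bij])
  also have "\<dots> = (\<Prod>S\<in>Jset k. (c^2) ^ nn n S) * (\<Prod>S\<in>Jset k. exp (- (c^2))) / (\<Prod>S\<in>Jset k. fact (nn n S))"
    by (simp add: pois_def prod.distrib prod_dividef power_mult)
  also have "(\<Prod>S\<in>Jset k. (c^2) ^ nn n S) = (c^2) ^ sum (nn n) (Jset k)" by (simp add: power_sum)
  also have "(\<Prod>S\<in>Jset k. exp (- (c^2))) = exp (- (real (card (Jset k)) * c^2))"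
    by (simp add: exp_of_nat_mult[symmetric])
  finally show ?thesis by simp
qed

lemma part3:
  fixes c :: real and k :: nat and n :: "nat \<Rightarrow> nat \<Rightarrow> nat"
  assumes c0: "c > 0"
  shows "(\<lambda>N::nat. \<Sum>A \<in> {A \<in> PiE {1..k} (\<lambda>_. Pow {1..N}).
                    \<forall>i j. 1 \<le> i \<and> i < j \<and> j \<le> k \<longrightarrow> card (A i \<inter> A j) = n i j}.
             \<Prod>i\<in>{1..k}. sigma_sq c N (A i))
         \<longlonglongrightarrow> (\<Prod>(i, j) \<in> {(i, j). 1 \<le> i \<and> i < j \<and> j \<le> k}. pois c (n i j))"
proof -
  have X: "(\<lambda>N. mcoef N (Jset k) (nn n) * ((c / sqrt (real N)) ^ 2 * (1 - c / sqrt (real N)) ^ (k - 2)) ^ sum (nn n) (Jset k)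
      * (\<Sum>S\<in>Oset k. mu (c / sqrt (real N)) k S) ^ (N - sum (nn n) (Jset k)))
    \<longlonglongrightarrow> ((c^2) ^ sum (nn n) (Jset k) / (\<Prod>S\<in>Jset k. fact (nn n S))) * exp (- (real (card (Jset k)) * c^2))"
    using X_lim[OF c0, of k n] by simp
  have Y: "(\<lambda>N. Yt (c / sqrt (real N)) k n N) \<longlonglongrightarrow> 0"
  proof (rule tendsto_sandwich[OF _ _ tendsto_const])
    show "(\<lambda>N. 2 ^ k * (real N * (c / sqrt (real N))^3)) \<longlonglongrightarrow> 0"
      using tendsto_mult[OF tendsto_const[of "2 ^ k"] lim_p3[of c]] by simp
    show "\<forall>\<^sub>F N in sequentially. 0 \<le> Yt (c / sqrt (real N)) k n N"
      using ev_big[of c] by eventually_elim (use p_bounds[OF c0] Y_bounds in auto)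
    show "\<forall>\<^sub>F N in sequentially. Yt (c / sqrt (real N)) k n N \<le> 2 ^ k * (real N * (c / sqrt (real N))^3)"
      using ev_big[of c]
    proof eventually_elim
      case (elim N)
      from Y_bounds(2)[OF p_bounds[OF c0 elim], of k n] show ?case by (simp add: mult_ac)
    qed
  qed
  have "(\<lambda>N. mcoef N (Jset k) (nn n) * ((c / sqrt (real N)) ^ 2 * (1 - c / sqrt (real N)) ^ (k - 2)) ^ sum (nn n) (Jset k)
      * (\<Sum>S\<in>Oset k. mu (c / sqrt (real N)) k S) ^ (N - sum (nn n) (Jset k)) + Yt (c / sqrt (real N)) k n N)
    \<longlonglongrightarrow> ((c^2) ^ sum (nn n) (Jset k) / (\<Prod>S\<in>Jset k. fact (nn n S))) * exp (- (real (card (Jset k)) * c^2)) + 0"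
    by (rule tendsto_add[OF X Y])
  thus ?thesis unfolding S3_split X_eq target_eq by simp
qed



theorem mainTheorem2:
  fixes d :: nat and c :: real
  assumes "d \<ge> 2" and "c > 0"
  shows
   "(\<forall>N::nat. real N > c ^ 2 \<longrightarrow> (\<Sum>A\<in>Pow {1..N}. sigma_sq c N A) = 1)
    \<and> (\<lambda>N::nat. \<Sum>(A1, A2, A3) \<in> {(A1, A2, A3). A1 \<subseteq> {1..N} \<and> A2 \<subseteq> {1..N} \<and> A3 \<subseteq> {1..N}
              \<and> A1 \<inter> A2 \<inter> A3 \<noteq> {}}.
          sigma_sq c N A1 * sigma_sq c N A2 * sigma_sq c N A3) \<longlonglongrightarrow> 0
    \<and> (\<forall>(k::nat) (n::nat \<Rightarrow> nat \<Rightarrow> nat).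
         (\<lambda>N::nat. \<Sum>A \<in> {A \<in> PiE {1..k} (\<lambda>_. Pow {1..N}).
                    \<forall>i j. 1 \<le> i \<and> i < j \<and> j \<le> k \<longrightarrow> card (A i \<inter> A j) = n i j}.
             \<Prod>i\<in>{1..k}. sigma_sq c N (A i))
         \<longlonglongrightarrow> (\<Prod>(i, j) \<in> {(i, j). 1 \<le> i \<and> i < j \<and> j \<le> k}. pois c (n i j)))
    \<and> (\<forall>n::nat. n \<ge> 1 \<longrightarrow>
         (\<lambda>N::nat. \<Sum>A \<in> PiE {1..n} (\<lambda>_. Pow {1..N}).
             (\<Prod>i\<in>{1..n}. sigma_sq c N (A i))
             * inverse (real d ^ (2 * card (A 1 - (\<Union>i\<in>{2..n}. A i)))))
         \<longlonglongrightarrow> 0)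
    \<and> (\<lambda>k. pois c k * inverse (real d ^ (2 * k))) sums exp (- (1 - 1 / real d ^ 2) * c ^ 2)"
proof (intro conjI)
  show "\<forall>N::nat. real N > c ^ 2 \<longrightarrow> (\<Sum>A\<in>Pow {1..N}. sigma_sq c N A) = 1"
    using part1 by blast
  show "(\<lambda>N::nat. \<Sum>(A1, A2, A3) \<in> {(A1, A2, A3). A1 \<subseteq> {1..N} \<and> A2 \<subseteq> {1..N} \<and> A3 \<subseteq> {1..N}
              \<and> A1 \<inter> A2 \<inter> A3 \<noteq> {}}.
          sigma_sq c N A1 * sigma_sq c N A2 * sigma_sq c N A3) \<longlonglongrightarrow> 0"
    by (rule part2[OF assms(2)])
  show "\<forall>(k::nat) (n::nat \<Rightarrow> nat \<Rightarrow> nat).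
         (\<lambda>N::nat. \<Sum>A \<in> {A \<in> PiE {1..k} (\<lambda>_. Pow {1..N}).
                    \<forall>i j. 1 \<le> i \<and> i < j \<and> j \<le> k \<longrightarrow> card (A i \<inter> A j) = n i j}.
             \<Prod>i\<in>{1..k}. sigma_sq c N (A i))
         \<longlonglongrightarrow> (\<Prod>(i, j) \<in> {(i, j). 1 \<le> i \<and> i < j \<and> j \<le> k}. pois c (n i j))"
    using part3[OF assms(2)] by blast
  show "\<forall>n::nat. n \<ge> 1 \<longrightarrow>
         (\<lambda>N::nat. \<Sum>A \<in> PiE {1..n} (\<lambda>_. Pow {1..N}).
             (\<Prod>i\<in>{1..n}. sigma_sq c N (A i))
             * inverse (real d ^ (2 * card (A 1 - (\<Union>i\<in>{2..n}. A i)))))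
         \<longlonglongrightarrow> 0"
    using part4[OF assms(1) assms(2)] by blast
  show "(\<lambda>k. pois c k * inverse (real d ^ (2 * k))) sums exp (- (1 - 1 / real d ^ 2) * c ^ 2)"
    by (rule part5[OF assms(1)])
qed

end
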